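(* Let $p \geq 2$ be an integer and $\mathbf{x},\mathbf{y} \in \operatorname{inc}(\mathbb{R},p)$ with $1 + x_jy_k > 0$ for all $j,k$. Let $C := (1+x_jy_k)_{j,k=1}^p$ and $C^{\circ\alpha} := ((1+x_jy_k)^\alpha)_{j,k=1}^p$. \begin{enumerate} \item If $\alpha > p-2$, then $C^{\circ\alpha}$ is $\mathrm{TP}$ (all minors of all orders are positive). \item If $\alpha \in \{0,1,\dots,p-2\}$, then $C^{\circ\alpha}$ has rank $\alpha+1$. \item If $\alpha \in (0,p-2)\setminus\mathbb{Z}$, then $C^{\circ\alpha}$ is not $\mathrm{TN}$; in fact there is a nonempty index set $J \subset \{1,\dots,p\}$ such that the principal minor $\det((1+x_jy_k)^\alpha)_{j,k\in J}$ is negative. \end{enumerate}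
   Context: For an integer $r \geq 1$, $\operatorname{inc}(\mathbb{R},r)$ denotes the set of $r$-tuples $(x_1,\dots,x_r) \in \mathbb{R}^r$ with $x_1 < \cdots < x_r$. A real matrix is $\mathrm{TN}$ (resp. $\mathrm{TP}$) if all its minors are $\ge0$ (resp. $>0$). *)

theory Defs
  imports Complex_Main "Jordan_Normal_Form.DL_Rank" "Jordan_Normal_Form.DL_Submatrix"
begin

text \<open>Real vectors (x_1,...,x_p) are modelled as functions nat => real on indices 0..p-1.\<close>

definition inc_vec :: "nat \<Rightarrow> (nat \<Rightarrow> real) \<Rightarrow> bool" where
  "inc_vec p x \<longleftrightarrow> (\<forall>i j. i < j \<and> j < p \<longrightarrow> x i < x j)"

definition TN_mat :: "real mat \<Rightarrow> bool" where
  "TN_mat A \<longleftrightarrow> (\<forall>I J. I \<subseteq> {0..<dim_row A} \<and> J \<subseteq> {0..<dim_col A} \<and> I \<noteq> {} \<and> card I = card J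
      \<longrightarrow> det (submatrix A I J) \<ge> 0)"

definition TP_mat :: "real mat \<Rightarrow> bool" where
  "TP_mat A \<longleftrightarrow> (\<forall>I J. I \<subseteq> {0..<dim_row A} \<and> J \<subseteq> {0..<dim_col A} \<and> I \<noteq> {} \<and> card I = card J
      \<longrightarrow> det (submatrix A I J) > 0)"

definition Cpow :: "nat \<Rightarrow> (nat \<Rightarrow> real) \<Rightarrow> (nat \<Rightarrow> real) \<Rightarrow> real \<Rightarrow> real mat" where
  "Cpow p x y \<alpha> = mat p p (\<lambda>(j,k). (1 + x j * y k) powr \<alpha>)"

end

theory Submission imports Defs "Jordan_Normal_Form.DL_Rank_Submatrix" begin

definition CM :: "nat \<Rightarrow> real \<Rightarrow> (nat\<Rightarrow>real) \<Rightarrow> (nat\<Rightarrow>real) \<Rightarrow> real mat" where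
  "CM n a t y = mat n n (\<lambda>(i,k). (1 + t i * y k) powr a)"

lemma det_row_scale:
  "det (mat n n (\<lambda>(i,k). c i * F i k)) = prod c {0..<n} * det (mat n n (\<lambda>(i,k). F i k))"
proof -
  have "det (mat n n (\<lambda>(i,k). c i * F i k)) =
     (\<Sum>p\<in>{p. p permutes {0..<n}}. signof p * (\<Prod>i=0..<n. c i * F i (p i)))"
    by (subst det_def'[of _ n]) (auto intro!: sum.cong prod.cong simp: permutes_in_image)
  also have "\<dots> = (\<Sum>p\<in>{p. p permutes {0..<n}}. prod c {0..<n} * (signof p * (\<Prod>i=0..<n. F i (p i))))"
    by (auto intro!: sum.cong simp: prod.distrib)
  also have "\<dots> = prod c {0..<n} * det (mat n n (\<lambda>(i,k). F i k))"
    by (subst det_def'[of _ n]) (auto intro!: sum.cong prod.cong simp: permutes_in_image sum_distrib_left)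
  finally show ?thesis .
qed

lemma det_col_scale:
  "det (mat n n (\<lambda>(i,k). c k * F i k)) = prod c {0..<n} * det (mat n n (\<lambda>(i,k). F i k))"
proof -
  have "det (mat n n (\<lambda>(i,k). c k * F i k)) =
     (\<Sum>p\<in>{p. p permutes {0..<n}}. signof p * (\<Prod>i=0..<n. c (p i) * F i (p i)))"
    by (subst det_def'[of _ n]) (auto intro!: sum.cong prod.cong simp: permutes_in_image)
  also have "\<dots> = (\<Sum>p\<in>{p. p permutes {0..<n}}. prod c {0..<n} * (signof p * (\<Prod>i=0..<n. F i (p i))))"
  proof (rule sum.cong[OF refl])
    fix p assume "p \<in> {p. p permutes {0..<n}}"
    then have "prod c {0..<n} = prod (c \<circ> p) {0..<n}" using prod.permute[of p "{0..<n}" c] by simp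
    then show "signof p * (\<Prod>i=0..<n. c (p i) * F i (p i)) = prod c {0..<n} * (signof p * (\<Prod>i=0..<n. F i (p i)))"
      by (simp add: prod.distrib)
  qed
  also have "\<dots> = prod c {0..<n} * det (mat n n (\<lambda>(i,k). F i k))"
    by (subst det_def'[of _ n]) (auto intro!: sum.cong prod.cong simp: permutes_in_image sum_distrib_left)
  finally show ?thesis .
qed

lemma det_row_lin:
  assumes "m < N"
  shows "det (mat N N (\<lambda>(i,k). if i = m then w k else F i k)) =
    (\<Sum>k<N. w k * cofactor (mat N N (\<lambda>(i,k). if i = m then 0 else F i k)) m k)"
proof -
  have "det (mat N N (\<lambda>(i,k). if i = m then w k else F i k)) =
    (\<Sum>k<N. mat N N (\<lambda>(i,k). if i = m then w k else F i k) $$ (m,k) * cofactor (mat N N (\<lambda>(i,k). if i = m then w k else F i k)) m k)"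
    by (rule laplace_expansion_row) (use assms in auto)
  also have "\<dots> = (\<Sum>k<N. w k * cofactor (mat N N (\<lambda>(i,k). if i = m then 0 else F i k)) m k)"
  proof (rule sum.cong[OF refl])
    fix k assume k: "k \<in> {..<N}"
    have "mat_delete (mat N N (\<lambda>(i,k). if i = m then w k else F i k)) m k =
          mat_delete (mat N N (\<lambda>(i,k). if i = m then 0 else F i k)) m k"
      unfolding mat_delete_def by (rule eq_matI) auto
    then show "mat N N (\<lambda>(i,k). if i = m then w k else F i k) $$ (m,k) * cofactor (mat N N (\<lambda>(i,k). if i = m then w k else F i k)) m k
        = w k * cofactor (mat N N (\<lambda>(i,k). if i = m then 0 else F i k)) m k"
      using k assms by (simp add: cofactor_def)
  qed
  finally show ?thesis .
qed

lemma det_last_col: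
  assumes "\<And>i. i < n \<Longrightarrow> F i n = 0" "F n n = 1"
  shows "det (mat (Suc n) (Suc n) (\<lambda>(i,k). F i k)) = det (mat n n (\<lambda>(i,k). F i k))"
proof -
  let ?A = "mat (Suc n) (Suc n) (\<lambda>(i,k). F i k)"
  have "det ?A = (\<Sum>i<Suc n. ?A $$ (i,n) * cofactor ?A i n)"
    by (rule laplace_expansion_column) auto
  also have "\<dots> = cofactor ?A n n" using assms by simp
  also have "\<dots> = det (mat_delete ?A n n)" by (simp add: cofactor_def)
  also have "mat_delete ?A n n = mat n n (\<lambda>(i,k). F i k)"
    unfolding mat_delete_def by (rule eq_matI) auto
  finally show ?thesis .
qed

lemma u_mono: "(\<forall>i. Suc i < N \<longrightarrow> (u i::real) < u (Suc i)) \<Longrightarrow> i \<le> j \<Longrightarrow> j < N \<Longrightarrow> u i \<le> u j"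
proof (induction j)
  case 0 then show ?case by simp
next
  case (Suc j)
  show ?case
  proof (cases "i = Suc j")
    case True then show ?thesis by simp
  next
    case False
    then have "i \<le> j" using Suc.prems by simp
    then have "u i \<le> u j" using Suc.IH Suc.prems by simp
    moreover have "u j < u (Suc j)" using Suc.prems by simp
    ultimately show ?thesis by simp
  qed
qed

lemma det_1: "det (mat 1 1 f) = f (0,0)"
proof -
  let ?A = "mat 1 1 f"
  have "det ?A = (\<Sum>i<1. ?A $$ (i,0) * cofactor ?A i 0)"
    by (rule laplace_expansion_column) auto
  also have "\<dots> = f (0,0) * det (mat_delete ?A 0 0)" by (simp add: cofactor_def)
  also have "det (mat_delete ?A 0 0) = 1"
    by (simp add: det_def mat_delete_def)
  finally show ?thesis by simp
qed

lemma pos_between: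
  fixes a b s z :: real
  assumes "0 < 1 + a*z" "0 < 1 + b*z" "a \<le> s" "s \<le> b"
  shows "0 < 1 + s*z"
proof (cases "z \<ge> 0")
  case True
  then have "a*z \<le> s*z" using assms(3) by (simp add: mult_right_mono)
  then show ?thesis using assms by linarith
next
  case False
  then have "b*z \<le> s*z" using assms(4) by (simp add: mult_right_mono_neg)
  then show ?thesis using assms by linarith
qed

lemma mixed:
  fixes g g' :: "real \<Rightarrow> nat \<Rightarrow> real" and u :: "nat \<Rightarrow> real"
  assumes inc: "\<forall>i. Suc i < N \<longrightarrow> u i < u (Suc i)"
  and der: "\<And>s k. u 0 \<le> s \<Longrightarrow> s \<le> u (N-1) \<Longrightarrow> k < N \<Longrightarrow> ((\<lambda>s. g s k) has_real_derivative g' s k) (at s)"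
  shows "m < N \<Longrightarrow> \<exists>\<xi>. (\<forall>i<m. u i < \<xi> i \<and> \<xi> i < u (Suc i)) \<and>
    det (mat N N (\<lambda>(i,k). g (u i) k)) =
    (\<Prod>i<m. u i - u (Suc i)) * det (mat N N (\<lambda>(i,k). if i < m then g' (\<xi> i) k else g (u i) k))"
proof (induction m)
  case 0 then show ?case by simp
next
  case (Suc m)
  then obtain \<xi> where xi: "\<forall>i<m. u i < \<xi> i \<and> \<xi> i < u (Suc i)" and
    eq: "det (mat N N (\<lambda>(i,k). g (u i) k)) =
    (\<Prod>i<m. u i - u (Suc i)) * det (mat N N (\<lambda>(i,k). if i < m then g' (\<xi> i) k else g (u i) k))"
    by auto
  define F where "F i k = (if i < m then g' (\<xi> i) k else g (u i) k)" for i k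
  define C where "C k = cofactor (mat N N (\<lambda>(i,k). if i = m then 0 else F i k)) m k" for k
  have m1: "m < N" "Suc m < N" using Suc.prems by auto
  have lin: "\<And>w. det (mat N N (\<lambda>(i,k). if i = m then w k else F i k)) = (\<Sum>k<N. w k * C k)"
    unfolding C_def using m1 by (intro det_row_lin) simp
  define \<phi> where "\<phi> s = (\<Sum>k<N. g s k * C k)" for s
  have ab: "u m < u (Suc m)" using inc m1 by auto
  have l0: "u 0 \<le> u m" by (rule u_mono[OF inc]) (use m1 in auto)
  have l1: "u (Suc m) \<le> u (N-1)" by (rule u_mono[OF inc]) (use m1 in auto)
  have D: "(\<phi> has_real_derivative (\<Sum>k<N. g' s k * C k)) (at s)"
    if "u m \<le> s" "s \<le> u (Suc m)" for s
    unfolding \<phi>_def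
    by (intro DERIV_sum DERIV_cmult_right der) (use that l0 l1 in auto)
  obtain \<zeta> where z: "u m < \<zeta>" "\<zeta> < u (Suc m)"
    "\<phi> (u (Suc m)) - \<phi> (u m) = (u (Suc m) - u m) * (\<Sum>k<N. g' \<zeta> k * C k)"
    using MVT2[OF ab D] by blast
  have "\<phi> (u (Suc m)) = det (mat N N (\<lambda>(i,k). if i = m then g (u (Suc m)) k else F i k))"
    unfolding \<phi>_def lin ..
  also have "\<dots> = 0"
  proof (rule det_identical_rows[of _ N m "Suc m"])
    show "row (mat N N (\<lambda>(i,k). if i = m then g (u (Suc m)) k else F i k)) m =
          row (mat N N (\<lambda>(i,k). if i = m then g (u (Suc m)) k else F i k)) (Suc m)"
      by (rule eq_vecI) (use m1 in \<open>auto simp: F_def\<close>)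
  qed (use m1 in auto)
  finally have p1: "\<phi> (u (Suc m)) = 0" .
  have "\<phi> (u m) = det (mat N N (\<lambda>(i,k). if i = m then g (u m) k else F i k))"
    unfolding \<phi>_def lin ..
  also have "mat N N (\<lambda>(i,k). if i = m then g (u m) k else F i k) =
      mat N N (\<lambda>(i,k). if i < m then g' (\<xi> i) k else g (u i) k)"
    by (rule eq_matI) (auto simp: F_def)
  finally have p0: "\<phi> (u m) = det (mat N N (\<lambda>(i,k). if i < m then g' (\<xi> i) k else g (u i) k))" .
  define \<xi>' where "\<xi>' = \<xi>(m := \<zeta>)"
  have "(\<Sum>k<N. g' \<zeta> k * C k) = det (mat N N (\<lambda>(i,k). if i = m then g' \<zeta> k else F i k))"
    unfolding lin ..
  also have "mat N N (\<lambda>(i,k). if i = m then g' \<zeta> k else F i k) =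
      mat N N (\<lambda>(i,k). if i < Suc m then g' (\<xi>' i) k else g (u i) k)"
    by (rule eq_matI) (auto simp: F_def \<xi>'_def)
  finally have pd: "(\<Sum>k<N. g' \<zeta> k * C k) = det (mat N N (\<lambda>(i,k). if i < Suc m then g' (\<xi>' i) k else g (u i) k))" .
  have "\<forall>i<Suc m. u i < \<xi>' i \<and> \<xi>' i < u (Suc i)"
    using xi z by (auto simp: \<xi>'_def less_Suc_eq)
  moreover have "det (mat N N (\<lambda>(i,k). g (u i) k)) =
    (\<Prod>i<Suc m. u i - u (Suc i)) * det (mat N N (\<lambda>(i,k). if i < Suc m then g' (\<xi>' i) k else g (u i) k))"
  proof -
    have "det (mat N N (\<lambda>(i,k). if i < m then g' (\<xi> i) k else g (u i) k)) =
       (u m - u (Suc m)) * det (mat N N (\<lambda>(i,k). if i < Suc m then g' (\<xi>' i) k else g (u i) k))"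
      using z(3) p0 p1 pd by (simp add: algebra_simps)
    then show ?thesis using eq by simp
  qed
  ultimately show ?case by blast
qed

fun S :: "nat \<Rightarrow> real \<Rightarrow> real" where
  "S 0 a = 1"
| "S (Suc n) a = sgn a ^ n * S n (a - 1)"

lemma S_one: "real n - 2 < a \<Longrightarrow> S n a = 1"
proof (induction n arbitrary: a)
  case 0 then show ?case by simp
next
  case (Suc n)
  have "S n (a - 1) = 1" using Suc by simp
  moreover have "sgn a ^ n = 1"
  proof (cases n)
    case 0 then show ?thesis by simp
  next
    case (Suc k) then have "a > 0" using Suc.prems by simp
    then show ?thesis by simp
  qed
  ultimately show ?case by simp
qed

lemma S_neg: "3 \<le> n \<Longrightarrow> real n - 3 < a \<Longrightarrow> a < real n - 2 \<Longrightarrow> S n a = -1"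
proof (induction n arbitrary: a rule: nat_induct_at_least)
  case base
  then have "0 < a" "a < 1" by auto
  then show ?case by (simp add: numeral_3_eq_3)
next
  case (Suc n)
  then have "0 < a" by simp
  then show ?case using Suc by simp
qed

lemma main_sign:
  assumes "1 \<le> n"
  shows "(\<forall>j::nat. j + 2 \<le> n \<longrightarrow> a \<noteq> real j) \<Longrightarrow> (\<forall>i j. i < j \<and> j < n \<longrightarrow> t i < t j) \<Longrightarrow>
    (\<forall>i j. i < j \<and> j < n \<longrightarrow> y i < y j) \<Longrightarrow> (\<forall>i<n. \<forall>k<n. 0 < 1 + t i * y k) \<Longrightarrow>
    0 < S n a * det (CM n a t y)"
  using assms
proof (induction n arbitrary: a t y rule: nat_induct_at_least)
  case base
  have "det (CM 1 a t y) = (1 + t 0 * y 0) powr a" unfolding CM_def using det_1[of "\<lambda>(i,k). (1 + t i * y k) powr a"] by simp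
  moreover have "0 < (1 + t 0 * y 0) powr a" using base.prems(4) by simp
  ultimately show ?case by simp
next
  case (Suc n)
  note hyp = Suc.prems(1) and tinc = Suc.prems(2) and yinc = Suc.prems(3) and dom = Suc.prems(4)
  define z where "z k = y k - y n" for k
  define u where "u i = t i / (1 + t i * y n)" for i
  have pn: "0 < 1 + t i * y n" if "i < Suc n" for i using dom that by simp
  have key: "1 + u i * z k = (1 + t i * y k) / (1 + t i * y n)" if "i < Suc n" for i k
    using pn[OF that] unfolding u_def z_def by (simp add: field_simps)
  have dom': "0 < 1 + u i * z k" if "i < Suc n" "k < Suc n" for i k
    using key[OF that(1)] dom that pn[OF that(1)] by simp
  have ent: "(1 + t i * y k) powr a = (1 + t i * y n) powr a * (1 + u i * z k) powr a"
    if "i < Suc n" "k < Suc n" for i k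
  proof -
    have "1 + t i * y k = (1 + t i * y n) * (1 + u i * z k)"
      using key[OF that(1)] pn[OF that(1)] by simp
    then show ?thesis using pn[OF that(1)] dom'[OF that] by (simp add: powr_mult)
  qed
  define P where "P = prod (\<lambda>i. (1 + t i * y n) powr a) {0..<Suc n}"
  have Ppos: "0 < P" unfolding P_def
  proof (intro prod_pos)
    fix i assume "i \<in> {0..<Suc n}"
    then have "0 < 1 + t i * y n" using pn by simp
    then show "0 < (1 + t i * y n) powr a" by simp
  qed
  have det1: "det (CM (Suc n) a t y) = P * det (CM (Suc n) a u z)"
  proof -
    have "CM (Suc n) a t y = mat (Suc n) (Suc n) (\<lambda>(i,k). (1 + t i * y n) powr a * (1 + u i * z k) powr a)"
      unfolding CM_def
    proof (rule eq_matI)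
      fix i k assume "i < dim_row (mat (Suc n) (Suc n) (\<lambda>(i,k). (1 + t i * y n) powr a * (1 + u i * z k) powr a))"
        "k < dim_col (mat (Suc n) (Suc n) (\<lambda>(i,k). (1 + t i * y n) powr a * (1 + u i * z k) powr a))"
      then have ik: "i < Suc n" "k < Suc n" by auto
      then show "mat (Suc n) (Suc n) (\<lambda>(i,k). (1 + t i * y k) powr a) $$ (i,k) =
        mat (Suc n) (Suc n) (\<lambda>(i,k). (1 + t i * y n) powr a * (1 + u i * z k) powr a) $$ (i,k)"
        using ent[OF ik] by simp
    qed auto
    then show ?thesis unfolding P_def CM_def by (simp add: det_row_scale)
  qed
  have uinc: "u i < u j" if "i < j" "j < Suc n" for i j
  proof -
    have "t i < t j" using tinc that by blast
    moreover have "0 < 1 + t i * y n" "0 < 1 + t j * y n" using pn that by auto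
    ultimately have pp: "0 < (1 + t i * y n) * (1 + t j * y n)" by simp
    have "u j - u i = (t j - t i) / ((1 + t i * y n) * (1 + t j * y n))"
    proof -
      have "1 + t i * y n \<noteq> 0" "1 + t j * y n \<noteq> 0" using pn that by (metis less_irrefl less_trans)+
      then show ?thesis unfolding u_def by (simp add: field_simps)
    qed
    moreover have "0 < (t j - t i) / ((1 + t i * y n) * (1 + t j * y n))"
      using \<open>t i < t j\<close> pp by simp
    ultimately show ?thesis by simp
  qed
  have zn: "z n = 0" by (simp add: z_def)
  have zneg: "z k < 0" if "k < n" for k using yinc that by (simp add: z_def)
  have zinc: "z i < z j" if "i < j" "j < n" for i j using yinc that by (simp add: z_def)
  define g where "g s k = (1 + s * z k) powr a" for s k
  define g' where "g' s k = a * (1 + s * z k) powr (a - 1) * z k" for s k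
  have inc: "\<forall>i. Suc i < Suc n \<longrightarrow> u i < u (Suc i)" using uinc by simp
  have der: "((\<lambda>s. g s k) has_real_derivative g' s k) (at s)"
    if "u 0 \<le> s" "s \<le> u (Suc n - 1)" "k < Suc n" for s k
  proof -
    have "0 < 1 + s * z k"
      by (rule pos_between[OF dom'[of 0 k] dom'[of n k]]) (use that in auto)
    moreover have "((\<lambda>s. 1 + s * z k) has_real_derivative z k) (at s)"
      by (auto intro!: derivative_eq_intros)
    ultimately show ?thesis unfolding g_def g'_def using DERIV_fun_powr[of "\<lambda>s. 1 + s * z k" "z k" s a]
      by simp
  qed
  obtain \<xi> where xi: "\<forall>i<n. u i < \<xi> i \<and> \<xi> i < u (Suc i)"
    and eq: "det (mat (Suc n) (Suc n) (\<lambda>(i,k). g (u i) k)) =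
      (\<Prod>i<n. u i - u (Suc i)) * det (mat (Suc n) (Suc n) (\<lambda>(i,k). if i < n then g' (\<xi> i) k else g (u i) k))"
    using mixed[of "Suc n" u g g' n, OF inc der] by auto
  have det2: "det (mat (Suc n) (Suc n) (\<lambda>(i,k). if i < n then g' (\<xi> i) k else g (u i) k))
      = det (mat n n (\<lambda>(i,k). g' (\<xi> i) k))"
  proof -
    have "det (mat (Suc n) (Suc n) (\<lambda>(i,k). if i < n then g' (\<xi> i) k else g (u i) k))
      = det (mat n n (\<lambda>(i,k). if i < n then g' (\<xi> i) k else g (u i) k))"
      by (rule det_last_col) (auto simp: g'_def g_def zn)
    also have "mat n n (\<lambda>(i,k). if i < n then g' (\<xi> i) k else g (u i) k) = mat n n (\<lambda>(i,k). g' (\<xi> i) k)"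
      by (rule eq_matI) auto
    finally show ?thesis .
  qed
  define Z where "Z = prod (\<lambda>k. a * z k) {0..<n}"
  define D where "D = det (CM n (a - 1) \<xi> z)"
  have det3: "det (mat n n (\<lambda>(i,k). g' (\<xi> i) k)) = Z * D"
  proof -
    have "mat n n (\<lambda>(i,k). g' (\<xi> i) k) = mat n n (\<lambda>(i,k). (a * z k) * (1 + \<xi> i * z k) powr (a - 1))"
      by (rule eq_matI) (auto simp: g'_def)
    then show ?thesis unfolding Z_def D_def CM_def by (simp add: det_col_scale)
  qed
  have IH: "0 < S n (a - 1) * D"
    unfolding D_def
  proof (rule Suc.IH)
    show "\<forall>j::nat. j + 2 \<le> n \<longrightarrow> a - 1 \<noteq> real j"
    proof (intro allI impI)
      fix j :: nat assume "j + 2 \<le> n"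
      then have "a \<noteq> real (Suc j)" using hyp by auto
      then show "a - 1 \<noteq> real j" by simp
    qed
    show "\<forall>i j. i < j \<and> j < n \<longrightarrow> \<xi> i < \<xi> j"
    proof (intro allI impI)
      fix i j assume ij: "i < j \<and> j < n"
      have "\<xi> i < u (Suc i)" using xi ij by auto
      also have "u (Suc i) \<le> u j" by (rule u_mono[OF inc]) (use ij in auto)
      also have "u j < \<xi> j" using xi ij by auto
      finally show "\<xi> i < \<xi> j" .
    qed
    show "\<forall>i j. i < j \<and> j < n \<longrightarrow> z i < z j" using zinc by blast
    show "\<forall>i<n. \<forall>k<n. 0 < 1 + \<xi> i * z k"
    proof (intro allI impI)
      fix i k assume "i < n" "k < n"
      then show "0 < 1 + \<xi> i * z k"
        using pos_between[OF dom'[of i k] dom'[of "Suc i" k], of "\<xi> i"] xi by force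
    qed
  qed
  define Q' where "Q' = (\<Prod>i<n. u (Suc i) - u i)"
  define Z' where "Z' = prod (\<lambda>k. - z k) {0..<n}"
  have Q'pos: "0 < Q'" unfolding Q'_def using uinc by (intro prod_pos) auto
  have Z'pos: "0 < Z'" unfolding Z'_def using zneg by (intro prod_pos) auto
  have Qeq: "(\<Prod>i<n. u i - u (Suc i)) = (-1)^n * Q'"
  proof -
    have "(\<Prod>i<n. u i - u (Suc i)) = (\<Prod>i<n. (-1) * (u (Suc i) - u i))" by simp
    also have "\<dots> = (\<Prod>i<n. (-1::real)) * Q'" unfolding Q'_def by (rule prod.distrib)
    finally show ?thesis by simp
  qed
  have Zeq: "Z = (-a)^n * Z'"
  proof -
    have "Z = (\<Prod>k\<in>{0..<n}. (-a) * (- z k))" unfolding Z_def by simp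
    also have "\<dots> = (\<Prod>k\<in>{0..<n}. (-a)) * Z'" unfolding Z'_def by (rule prod.distrib)
    finally show ?thesis by simp
  qed
  have "0 + 2 \<le> Suc n" using Suc.hyps by simp
  then have "a \<noteq> real 0" using hyp by blast
  then have a0: "a \<noteq> 0" by simp
  have sa: "sgn a * a > 0" using a0 by (cases "a > 0") (auto simp: sgn_if)
  have m1: "(-1::real)^n * (-a)^n = a^n" by (simp add: power_mult_distrib[symmetric])
  have cmg: "CM (Suc n) a u z = mat (Suc n) (Suc n) (\<lambda>(i,k). g (u i) k)"
    unfolding CM_def g_def ..
  have "det (CM (Suc n) a t y) = P * ((\<Prod>i<n. u i - u (Suc i)) * (Z * D))"
    using det1 unfolding cmg eq det2 det3 .
  also have "\<dots> = P * ((-1)^n * Q' * ((-a)^n * Z' * D))" unfolding Qeq Zeq ..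
  also have "\<dots> = P * Q' * Z' * ((-1)^n * (-a)^n) * D" by (simp only: mult_ac)
  also have "\<dots> = P * Q' * Z' * a^n * D" unfolding m1 ..
  finally have dd: "det (CM (Suc n) a t y) = P * Q' * Z' * a^n * D" .
  have "S (Suc n) a * det (CM (Suc n) a t y) = (P * Q' * Z') * (sgn a * a)^n * (S n (a - 1) * D)"
    unfolding dd by (simp only: S.simps power_mult_distrib mult_ac)
  also have "\<dots> > 0" by (rule mult_pos_pos[OF mult_pos_pos[OF mult_pos_pos[OF mult_pos_pos[OF Ppos Q'pos] Z'pos] zero_less_power[OF sa]] IH])
  finally show ?case .
qed

lemma sub_CM:
  assumes "I \<subseteq> {0..<p}" "J \<subseteq> {0..<p}" "card I = card J"
  shows "submatrix (Cpow p x y a) I J = CM (card I) a (\<lambda>i. x (pick I i)) (\<lambda>k. y (pick J k))"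
proof -
  have cI: "{i. i < dim_row (Cpow p x y a) \<and> i \<in> I} = I" using assms by (auto simp: Cpow_def)
  have cJ: "{i. i < dim_col (Cpow p x y a) \<and> i \<in> J} = J" using assms by (auto simp: Cpow_def)
  have fI: "finite I" using assms finite_subset by blast
  have fJ: "finite J" using assms finite_subset by blast
  have pI: "pick I i < p" if "i < card I" for i using pick_in_set[of i I] that assms by auto
  have pJ: "pick J i < p" if "i < card J" for i using pick_in_set[of i J] that assms by auto
  show ?thesis
    unfolding submatrix_def cI cJ
    by (rule eq_matI) (use pI pJ assms(3) in \<open>auto simp: CM_def Cpow_def\<close>)
qed

lemma minor_sign:
  assumes xi: "inc_vec p x" and yi: "inc_vec p y"
    and dom: "\<forall>j<p. \<forall>k<p. 1 + x j * y k > 0"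
    and IJ: "I \<subseteq> {0..<p}" "J \<subseteq> {0..<p}" "I \<noteq> {}" "card I = card J"
    and h: "\<forall>j::nat. j + 2 \<le> card I \<longrightarrow> a \<noteq> real j"
  shows "0 < S (card I) a * det (submatrix (Cpow p x y a) I J)"
proof -
  have fI: "finite I" using IJ finite_subset by blast
  have fJ: "finite J" using IJ finite_subset by blast
  have c1: "1 \<le> card I" using fI IJ(3) by (simp add: Suc_le_eq card_gt_0_iff)
  have pI: "pick I i < p" if "i < card I" for i using pick_in_set[of i I] that IJ by auto
  have pJ: "pick J i < p" if "i < card J" for i using pick_in_set[of i J] that IJ by auto
  show ?thesis
    unfolding sub_CM[OF IJ(1,2,4)]
  proof (rule main_sign[OF c1 h])
    show "\<forall>i j. i < j \<and> j < card I \<longrightarrow> x (pick I i) < x (pick I j)"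
    proof (intro allI impI)
      fix i j assume ij: "i < j \<and> j < card I"
      then have "pick I i < pick I j" using pick_mono[of j I i] by auto
      then show "x (pick I i) < x (pick I j)" using xi pI ij unfolding inc_vec_def by auto
    qed
    show "\<forall>i j. i < j \<and> j < card I \<longrightarrow> y (pick J i) < y (pick J j)"
    proof (intro allI impI)
      fix i j assume ij: "i < j \<and> j < card I"
      then have "pick J i < pick J j" using pick_mono[of j J i] IJ(4) by auto
      then show "y (pick J i) < y (pick J j)" using yi pJ ij IJ(4) unfolding inc_vec_def by auto
    qed
    show "\<forall>i<card I. \<forall>k<card I. 0 < 1 + x (pick I i) * y (pick J k)"
      using dom pI pJ IJ(4) by auto
  qed
qed

theorem mainTheorem8:
  fixes p :: nat and x y :: "nat \<Rightarrow> real"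
  assumes "p \<ge> 2"
    and "inc_vec p x" and "inc_vec p y"
    and "\<And>j k. j < p \<Longrightarrow> k < p \<Longrightarrow> 1 + x j * y k > 0"
  shows "(\<forall>\<alpha>::real. \<alpha> > real p - 2 \<longrightarrow> TP_mat (Cpow p x y \<alpha>))
    \<and> (\<forall>m::nat. m \<le> p - 2 \<longrightarrow> vec_space.rank p (Cpow p x y (real m)) = m + 1)
    \<and> (\<forall>\<alpha>::real. 0 < \<alpha> \<and> \<alpha> < real p - 2 \<and> \<alpha> \<notin> \<int> \<longrightarrow>
         \<not> TN_mat (Cpow p x y \<alpha>)
         \<and> (\<exists>J. J \<subseteq> {0..<p} \<and> J \<noteq> {} \<and> det (submatrix (Cpow p x y \<alpha>) J J) < 0))"
proof (intro conjI allI impI)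
  have dm: "\<forall>j<p. \<forall>k<p. 1 + x j * y k > 0" using assms(4) by auto
  note ms = minor_sign[OF assms(2,3) dm]
  have carr: "Cpow p x y a \<in> carrier_mat p p" for a by (simp add: Cpow_def)
  fix \<alpha> :: real assume al: "\<alpha> > real p - 2"
  show "TP_mat (Cpow p x y \<alpha>)"
    unfolding TP_mat_def
  proof (intro allI impI)
    fix I J assume IJ: "I \<subseteq> {0..<dim_row (Cpow p x y \<alpha>)} \<and> J \<subseteq> {0..<dim_col (Cpow p x y \<alpha>)} \<and> I \<noteq> {} \<and> card I = card J"
    then have IJ': "I \<subseteq> {0..<p}" "J \<subseteq> {0..<p}" "I \<noteq> {}" "card I = card J" by (auto simp: Cpow_def)
    have "card I \<le> p" using card_mono[OF _ IJ'(1)] by simp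
    then have "real (card I) - 2 < \<alpha>" using al by linarith
    then have S1: "S (card I) \<alpha> = 1" by (rule S_one)
    have "\<forall>j::nat. j + 2 \<le> card I \<longrightarrow> \<alpha> \<noteq> real j"
    proof (intro allI impI)
      fix j :: nat assume "j + 2 \<le> card I"
      then have "real j + 2 \<le> real (card I)" by linarith
      then show "\<alpha> \<noteq> real j" using \<open>real (card I) - 2 < \<alpha>\<close> by linarith
    qed
    from ms[OF IJ' this] S1 show "0 < det (submatrix (Cpow p x y \<alpha>) I J)" by simp
  qed
next
  have dm: "\<forall>j<p. \<forall>k<p. 1 + x j * y k > 0" using assms(4) by auto
  note ms = minor_sign[OF assms(2,3) dm]
  have carr: "Cpow p x y a \<in> carrier_mat p p" for a by (simp add: Cpow_def)
  fix m :: nat assume mp: "m \<le> p - 2"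
  let ?A = "Cpow p x y (real m)"
  define I where "I = {0..<Suc m}"
  have I: "I \<subseteq> {0..<p}" "I \<noteq> {}" "card I = Suc m" using mp assms(1) by (auto simp: I_def)
  have "\<forall>j::nat. j + 2 \<le> card I \<longrightarrow> real m \<noteq> real j" using I by auto
  from ms[OF I(1) I(1) I(2) refl this] have "det (submatrix ?A I I) \<noteq> 0" by auto
  from vec_space.rank_gt_minor[OF carr this]
  have "card {j. j < p \<and> j \<in> I} \<le> vec_space.rank p ?A" .
  moreover have "{j. j < p \<and> j \<in> I} = I" using I by auto
  ultimately have lo: "m + 1 \<le> vec_space.rank p ?A" using I by simp
  define B where "B q = mat p p (\<lambda>(j,k). \<Sum>i<q. (of_nat (m choose i) * x j ^ i) * y k ^ i)" for q
  have Bc: "B q \<in> carrier_mat p p" for q by (simp add: B_def)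
  have rB: "vec_space.rank p (B q) \<le> q" for q
  proof (induction q)
    case 0
    have "B 0 = 0\<^sub>m p p" by (rule eq_matI) (auto simp: B_def)
    then show ?case using vec_space.rank_0I by simp
  next
    case (Suc q)
    define R where "R = mat p p (\<lambda>(j,k). (of_nat (m choose q) * x j ^ q) * y k ^ q)"
    have Rc: "R \<in> carrier_mat p p" by (simp add: R_def)
    have "B (Suc q) = B q + R" by (rule eq_matI) (auto simp: B_def R_def)
    moreover have "vec_space.rank p (B q + R) \<le> vec_space.rank p (B q) + vec_space.rank p R"
      by (rule vec_space.rank_subadditive[OF Bc Rc])
    moreover have "vec_space.rank p R \<le> 1"
      by (rule vec_space.rank_le_1_product_entries[OF Rc, of "\<lambda>j. of_nat (m choose q) * x j ^ q" "\<lambda>k. y k ^ q"])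
        (auto simp: R_def)
    ultimately show ?case using Suc.IH by simp
  qed
  have "?A = B (Suc m)"
  proof (rule eq_matI)
    fix j k assume jk: "j < dim_row (B (Suc m))" "k < dim_col (B (Suc m))"
    then have jk': "j < p" "k < p" by (auto simp: B_def)
    have pos: "0 < 1 + x j * y k" using assms(4) jk' by simp
    have "(1 + x j * y k) powr real m = (x j * y k + 1) ^ m" using pos by (simp add: powr_realpow add.commute)
    also have "\<dots> = (\<Sum>i\<le>m. of_nat (m choose i) * (x j * y k) ^ i * 1 ^ (m - i))" by (rule binomial_ring)
    also have "\<dots> = (\<Sum>i<Suc m. (of_nat (m choose i) * x j ^ i) * y k ^ i)"
      by (simp add: lessThan_Suc_atMost power_mult_distrib mult.assoc)
    finally show "?A $$ (j,k) = B (Suc m) $$ (j,k)" using jk' by (simp add: Cpow_def B_def)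
  qed (auto simp: Cpow_def B_def)
  then have "vec_space.rank p ?A \<le> m + 1" using rB[of "Suc m"] by simp
  with lo show "vec_space.rank p ?A = m + 1" by simp
next
  have dm: "\<forall>j<p. \<forall>k<p. 1 + x j * y k > 0" using assms(4) by auto
  note ms = minor_sign[OF assms(2,3) dm]
  fix \<alpha> :: real assume al: "0 < \<alpha> \<and> \<alpha> < real p - 2 \<and> \<alpha> \<notin> \<int>"
  define r where "r = nat \<lfloor>\<alpha>\<rfloor> + 3"
  define J where "J = {0..<r}"
  have fl0: "0 \<le> \<lfloor>\<alpha>\<rfloor>" using al by simp
  have fle: "real_of_int \<lfloor>\<alpha>\<rfloor> \<le> \<alpha>" by simp
  have fne: "real_of_int \<lfloor>\<alpha>\<rfloor> \<noteq> \<alpha>" using al by (metis Ints_of_int)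
  have flt: "\<alpha> < real_of_int \<lfloor>\<alpha>\<rfloor> + 1" by linarith
  have rr: "real r = real_of_int \<lfloor>\<alpha>\<rfloor> + 3" unfolding r_def using fl0 by simp
  have "real_of_int \<lfloor>\<alpha>\<rfloor> < real p - 2" using fle al by linarith
  then have "\<lfloor>\<alpha>\<rfloor> < int p - 2" by linarith
  then have rp: "r \<le> p" unfolding r_def using fl0 by linarith
  have J: "J \<subseteq> {0..<p}" "J \<noteq> {}" "card J = r" using rp by (auto simp: J_def r_def)
  have h: "\<forall>j::nat. j + 2 \<le> card J \<longrightarrow> \<alpha> \<noteq> real j"
  proof (intro allI impI)
    fix j :: nat
    have "real j \<in> \<int>" by simp
    then show "\<alpha> \<noteq> real j" using al by auto
  qed
  have Sm: "S r \<alpha> = -1"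
  proof (rule S_neg)
    show "3 \<le> r" by (simp add: r_def)
    have "real_of_int \<lfloor>\<alpha>\<rfloor> < \<alpha>" using fle fne by linarith
    then show "real r - 3 < \<alpha>" using rr by linarith
    show "\<alpha> < real r - 2" using rr flt by linarith
  qed
  from ms[OF J(1) J(1) J(2) refl h] Sm J(3)
  have neg: "det (submatrix (Cpow p x y \<alpha>) J J) < 0" by (simp add: mult_less_0_iff zero_less_mult_iff)
  show "\<not> TN_mat (Cpow p x y \<alpha>)"
  proof
    assume "TN_mat (Cpow p x y \<alpha>)"
    then have "det (submatrix (Cpow p x y \<alpha>) J J) \<ge> 0"
      unfolding TN_mat_def using J by (auto simp: Cpow_def)
    with neg show False by simp
  qed
  show "\<exists>J. J \<subseteq> {0..<p} \<and> J \<noteq> {} \<and> det (submatrix (Cpow p x y \<alpha>) J J) < 0"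
    using J neg by blast
qed

end
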